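(* Let $Q$ be a quiver and $\theta\in\mathbb{Z}^{Q_0}$ with $\nabla(Q,\theta)\ne\emptyset$. Suppose $S\subset Q_0$ is such that there is at most one arrow $a$ with $a^+\in S$, $a^-\notin S$ and at most one arrow $b$ with $b^+\notin S$, $b^-\in S$. Then $a$ (if it exists) is contractable when $\theta(S)\ge0$, and $b$ (if it exists) is contractable when $\theta(S)\le0$, where $\theta(S)=\sum_{v\in S}\theta(v)$.
   Context: A quiver $Q$: vertices $Q_0$, arrows $Q_1$, $a$ from $a^-$ to $a^+$. $\nabla(Q,\theta)=\{x\in\mathbb{R}_{\ge0}^{Q_1}\mid\forall v:\ \theta(v)=\sum_{a^+=v}x(a)-\sum_{a^-=v}x(a)\}$. Contracting a non-loop arrow $a$ gives $(\hat Q,\hat\theta)$: delete $a$, glue $a^-$ and $a^+$ to a vertex $v$, $\hat\theta(v)=\theta(a^-)+\theta(a^+)$, $\hat\theta=\theta$ elsewhere. The arrow is contractable if $\nabla(Q,\theta)$ and $\nabla(\hat Q,\hat\theta)$ are integral-affinely equivalent, i.e. there is an affine isomorphism between their affine spans mapping the lattice points ($\mathbb{Z}^{Q_1}$, resp. $\mathbb{Z}^{\hat Q_1}$) of one span onto those of the other and one polyhedron onto the other. *)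

theory Defs
  imports Complex_Main
begin

text \<open>A quiver is given by a vertex set Q0, an arrow set Q1 and maps tlv, hdv
  (tlv a = a^-, hdv a = a^+). Points of R^{Q1} are functions arrows => real vanishing
  outside Q1.\<close>

definition flow_polytope ::
  "'v set \<Rightarrow> 'a set \<Rightarrow> ('a \<Rightarrow> 'v) \<Rightarrow> ('a \<Rightarrow> 'v) \<Rightarrow> ('v \<Rightarrow> int) \<Rightarrow> ('a \<Rightarrow> real) set" where
  "flow_polytope Q0 Q1 tlv hdv \<theta> =
     {x. (\<forall>i. i \<notin> Q1 \<longrightarrow> x i = 0) \<and> (\<forall>i\<in>Q1. 0 \<le> x i) \<and>
         (\<forall>v\<in>Q0. real_of_int (\<theta> v) =
             (\<Sum>a\<in>{a\<in>Q1. hdv a = v}. x a) - (\<Sum>a\<in>{a\<in>Q1. tlv a = v}. x a))}"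

definition aff_span :: "('a \<Rightarrow> real) set \<Rightarrow> ('a \<Rightarrow> real) set" where
  "aff_span P = {x. \<exists>T u. finite T \<and> T \<subseteq> P \<and> sum u T = 1 \<and>
                        x = (\<lambda>i. \<Sum>y\<in>T. u y * y i)}"

definition lattice_pts :: "('a \<Rightarrow> real) set" where
  "lattice_pts = {x. \<forall>i. x i \<in> \<int>}"

definition int_aff_equiv :: "('a \<Rightarrow> real) set \<Rightarrow> ('b \<Rightarrow> real) set \<Rightarrow> bool" where
  "int_aff_equiv P R \<longleftrightarrow> (\<exists>f :: ('a \<Rightarrow> real) \<Rightarrow> ('b \<Rightarrow> real).
      (\<forall>x\<in>aff_span P. \<forall>y\<in>aff_span P. \<forall>t::real.
          f (\<lambda>i. (1 - t) * x i + t * y i) = (\<lambda>j. (1 - t) * f x j + t * f y j)) \<and>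
      bij_betw f (aff_span P) (aff_span R) \<and>
      f ` (aff_span P \<inter> lattice_pts) = aff_span R \<inter> lattice_pts \<and>
      f ` P = R)"

text \<open>Contraction of arrow a: delete a, glue a^+ onto a^- (the glued vertex is
  represented by a^-).\<close>
definition glue :: "('a \<Rightarrow> 'v) \<Rightarrow> ('a \<Rightarrow> 'v) \<Rightarrow> 'a \<Rightarrow> 'v \<Rightarrow> 'v" where
  "glue tlv hdv a w = (if w = hdv a then tlv a else w)"

definition contr_theta :: "('a \<Rightarrow> 'v) \<Rightarrow> ('a \<Rightarrow> 'v) \<Rightarrow> ('v \<Rightarrow> int) \<Rightarrow> 'a \<Rightarrow> 'v \<Rightarrow> int" where
  "contr_theta tlv hdv \<theta> a w = (if w = tlv a then \<theta> (tlv a) + \<theta> (hdv a) else \<theta> w)"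

definition contractable ::
  "'v set \<Rightarrow> 'a set \<Rightarrow> ('a \<Rightarrow> 'v) \<Rightarrow> ('a \<Rightarrow> 'v) \<Rightarrow> ('v \<Rightarrow> int) \<Rightarrow> 'a \<Rightarrow> bool" where
  "contractable Q0 Q1 tlv hdv \<theta> a \<longleftrightarrow> a \<in> Q1 \<and> tlv a \<noteq> hdv a \<and>
     int_aff_equiv (flow_polytope Q0 Q1 tlv hdv \<theta>)
       (flow_polytope (glue tlv hdv a ` Q0) (Q1 - {a}) (glue tlv hdv a \<circ> tlv) (glue tlv hdv a \<circ> hdv)
          (contr_theta tlv hdv \<theta> a))"

end

theory Submission imports Defs begin

definition nf :: "'a set \<Rightarrow> ('a\<Rightarrow>'v) \<Rightarrow> ('a\<Rightarrow>'v) \<Rightarrow> ('a \<Rightarrow> real) \<Rightarrow> 'v \<Rightarrow> real" where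
 "nf Q1 tv hv x v = (\<Sum>c\<in>Q1. x c * ((if hv c = v then 1 else 0) - (if tv c = v then 1 else 0)))"

lemma nf_eq: "finite Q1 \<Longrightarrow> (\<Sum>a\<in>{a\<in>Q1. hv a = v}. x a) - (\<Sum>a\<in>{a\<in>Q1. tv a = v}. x a) = nf Q1 tv hv x v"
  unfolding nf_def by (simp add: sum.inter_filter sum_subtractf[symmetric] right_diff_distrib, rule sum.cong, auto)

lemma fp_iff: "finite Q1 \<Longrightarrow> x \<in> flow_polytope Q0 Q1 tv hv \<theta> \<longleftrightarrow>
  (\<forall>i. i\<notin>Q1 \<longrightarrow> x i = 0) \<and> (\<forall>i\<in>Q1. 0 \<le> x i) \<and> (\<forall>v\<in>Q0. real_of_int (\<theta> v) = nf Q1 tv hv x v)"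
  unfolding flow_polytope_def by (simp add: nf_eq)

lemma nf_sum: "finite S \<Longrightarrow> (\<Sum>v\<in>S. nf Q1 tv hv x v) =
   (\<Sum>c\<in>Q1. x c * ((if hv c \<in> S then 1 else 0) - (if tv c \<in> S then 1 else 0)))"
proof -
  assume fS: "finite S"
  have "(\<Sum>v\<in>S. nf Q1 tv hv x v) = (\<Sum>c\<in>Q1. \<Sum>v\<in>S. x c * ((if hv c = v then 1 else 0) - (if tv c = v then 1 else 0)))"
    unfolding nf_def by (rule sum.swap)
  also have "\<dots> = (\<Sum>c\<in>Q1. x c * ((if hv c \<in> S then 1 else 0) - (if tv c \<in> S then 1 else 0)))"
  proof (rule sum.cong[OF refl])
    fix c
    have "(\<Sum>v\<in>S. x c * ((if hv c = v then 1 else 0) - (if tv c = v then 1 else 0)))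
       = x c * ((\<Sum>v\<in>S. (if hv c = v then 1 else 0)) - (\<Sum>v\<in>S. (if tv c = v then 1 else 0)))"
      by (simp add: sum_distrib_left sum_subtractf[symmetric] right_diff_distrib)
    also have "\<dots> = x c * ((if hv c \<in> S then 1 else 0) - (if tv c \<in> S then 1 else 0))"
      using fS by (simp add: sum.delta)
    finally show "(\<Sum>v\<in>S. x c * ((if hv c = v then 1 else 0) - (if tv c = v then 1 else 0)))
       = x c * ((if hv c \<in> S then 1 else 0) - (if tv c \<in> S then 1 else 0))" .
  qed
  finally show ?thesis .
qed

lemma aff_sub: "P \<subseteq> aff_span P"
proof
  fix x assume "x \<in> P"
  then show "x \<in> aff_span P" unfolding aff_span_def
    by (intro CollectI exI[of _ "{x}"] exI[of _ "\<lambda>_. 1"]) auto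
qed

lemma aff_lin:
  assumes fB: "finite B" and H: "\<forall>y\<in>P. y a = c + (\<Sum>b\<in>B. y b)" and x: "x \<in> aff_span P"
  shows "x a = c + (\<Sum>b\<in>B. x b)"
proof -
  from x obtain T u where T: "finite T" "T \<subseteq> P" "sum u T = 1" and xd: "x = (\<lambda>i. \<Sum>y\<in>T. u y * y i)"
    unfolding aff_span_def by blast
  have "x a = (\<Sum>y\<in>T. u y * (c + (\<Sum>b\<in>B. y b)))" using H T(2) xd
    by (auto intro!: sum.cong)
  also have "\<dots> = c * sum u T + (\<Sum>y\<in>T. \<Sum>b\<in>B. u y * y b)"
    by (simp add: distrib_left sum.distrib sum_distrib_left sum_distrib_right mult.commute)
  also have "\<dots> = c + (\<Sum>b\<in>B. x b)" using T(3) xd by (simp add: sum.swap[of _ T])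
  finally show ?thesis .
qed

lemma aff_zero:
  assumes H: "\<forall>y\<in>P. y a = 0" and x: "x \<in> aff_span P"
  shows "x a = 0"
  using aff_lin[of "{}" P a 0 x] assms by simp

lemma aff_image:
  assumes inj: "inj_on h P"
    and comb: "\<And>T u. finite T \<Longrightarrow> T \<subseteq> P \<Longrightarrow> sum u T = 1 \<Longrightarrow>
         h (\<lambda>i. \<Sum>y\<in>T. u y * y i) = (\<lambda>i. \<Sum>y\<in>T. u y * h y i)"
  shows "h ` aff_span P \<subseteq> aff_span (h ` P)"
proof
  fix z assume "z \<in> h ` aff_span P"
  then obtain x where x: "x \<in> aff_span P" and z: "z = h x" by blast
  from x obtain T u where T: "finite T" "T \<subseteq> P" "sum u T = 1" and xd: "x = (\<lambda>i. \<Sum>y\<in>T. u y * y i)"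
    unfolding aff_span_def by blast
  have injT: "inj_on h T" using inj T(2) by (rule inj_on_subset)
  define u' where "u' = u \<circ> inv_into T h"
  have s1: "sum u' (h ` T) = 1"
    using T(3) by (simp add: sum.reindex[OF injT] u'_def inv_into_f_f[OF injT])
  have s2: "z = (\<lambda>i. \<Sum>y\<in>h ` T. u' y * y i)"
    using comb[OF T] xd z by (simp add: sum.reindex[OF injT] u'_def inv_into_f_f[OF injT])
  show "z \<in> aff_span (h ` P)" unfolding aff_span_def
    using T s1 s2 by blast
qed


lemma nf_remove: "finite Q1 \<Longrightarrow> a \<in> Q1 \<Longrightarrow> nf Q1 tv hv x v =
   x a * ((if hv a = v then 1 else 0) - (if tv a = v then 1 else 0)) + nf (Q1 - {a}) tv hv x v"
  unfolding nf_def by (simp add: sum.remove)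

lemma nf_cong: "(\<And>c. c \<in> Q1 \<Longrightarrow> x c = y c) \<Longrightarrow> nf Q1 tv hv x v = nf Q1 tv hv y v"
  unfolding nf_def by (auto intro!: sum.cong)

lemma nf_glue_other:
  assumes "finite Q1" "a \<in> Q1" "w \<noteq> tv a" "w \<noteq> hv a"
  shows "nf (Q1 - {a}) (glue tv hv a \<circ> tv) (glue tv hv a \<circ> hv) x w = nf Q1 tv hv x w"
proof -
  have "nf (Q1 - {a}) (glue tv hv a \<circ> tv) (glue tv hv a \<circ> hv) x w = nf (Q1 - {a}) tv hv x w"
    unfolding nf_def using assms(3,4) by (intro sum.cong refl) (auto simp: glue_def)
  then show ?thesis using nf_remove[OF assms(1,2), of tv hv x w] assms(3,4) by simp
qed

lemma nf_glue_t:
  assumes "finite Q1" "a \<in> Q1" "tv a \<noteq> hv a"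
  shows "nf (Q1 - {a}) (glue tv hv a \<circ> tv) (glue tv hv a \<circ> hv) x (tv a) = nf Q1 tv hv x (tv a) + nf Q1 tv hv x (hv a)"
proof -
  have "nf (Q1 - {a}) (glue tv hv a \<circ> tv) (glue tv hv a \<circ> hv) x (tv a) = nf (Q1 - {a}) tv hv x (tv a) + nf (Q1 - {a}) tv hv x (hv a)"
    unfolding nf_def sum.distrib[symmetric] using assms(3) by (intro sum.cong refl) (auto simp: glue_def algebra_simps)
  then show ?thesis using nf_remove[OF assms(1,2), of tv hv x "tv a"] nf_remove[OF assms(1,2), of tv hv x "hv a"] assms(3) by simp
qed


lemma contract_in:
  fixes Q0 :: "'v set" and Q1 :: "'a set" and tv hv :: "'a \<Rightarrow> 'v"
    and \<theta> :: "'v \<Rightarrow> int" and S :: "'v set"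
  assumes fQ0: "finite Q0" and fQ1: "finite Q1"
    and arr: "\<forall>c\<in>Q1. tv c \<in> Q0 \<and> hv c \<in> Q0"
    and SQ: "S \<subseteq> Q0" and aQ: "a \<in> Q1" and ha: "hv a \<in> S" and ta: "tv a \<notin> S"
    and uniq: "\<forall>c\<in>Q1. hv c \<in> S \<and> tv c \<notin> S \<longrightarrow> c = a"
    and pos: "sum \<theta> S \<ge> 0"
  shows "contractable Q0 Q1 tv hv \<theta> a"
proof -
  define P where "P = flow_polytope Q0 Q1 tv hv \<theta>"
  define R where "R = flow_polytope (glue tv hv a ` Q0) (Q1 - {a}) (glue tv hv a \<circ> tv) (glue tv hv a \<circ> hv)
          (contr_theta tv hv \<theta> a)"
  define B where "B = {b\<in>Q1. hv b \<notin> S \<and> tv b \<in> S}"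
  define c0 where "c0 = real_of_int (sum \<theta> S)"
  define f where "f = (\<lambda>x::'a\<Rightarrow>real. x(a:=0))"
  define g where "g = (\<lambda>y::'a\<Rightarrow>real. y(a:= c0 + (\<Sum>b\<in>B. y b)))"
  have fS: "finite S" using fQ0 SQ finite_subset by blast
  have fB: "finite B" using fQ1 unfolding B_def by simp
  have aB: "a \<notin> B" using ha unfolding B_def by simp
  have BQ: "B \<subseteq> Q1 - {a}" using aB unfolding B_def by auto
  have th: "tv a \<noteq> hv a" using ha ta by auto
  have tQ: "tv a \<in> Q0" and hQ: "hv a \<in> Q0" using arr aQ by auto
  have fQ1': "finite (Q1 - {a})" using fQ1 by simp
  have glueQ: "glue tv hv a ` Q0 = Q0 - {hv a}"
    using tQ th by (auto simp: glue_def image_iff)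
  have keyS: "(\<Sum>v\<in>S. nf Q1 tv hv x v) = x a - (\<Sum>b\<in>B. x b)" for x
  proof -
    have "(\<Sum>v\<in>S. nf Q1 tv hv x v) =
      (\<Sum>c\<in>Q1. x c * ((if hv c \<in> S then 1 else 0) - (if tv c \<in> S then 1 else 0)))"
      by (rule nf_sum[OF fS])
    also have "\<dots> = (\<Sum>c\<in>Q1. (if a = c then x c else 0) - (if c \<in> B then x c else 0))"
    proof (rule sum.cong[OF refl])
      fix c assume c: "c \<in> Q1"
      show "x c * ((if hv c \<in> S then 1 else 0) - (if tv c \<in> S then 1 else 0)) =
            (if a = c then x c else 0) - (if c \<in> B then x c else 0)"
        using uniq c ha ta unfolding B_def by auto
    qed
    also have "\<dots> = x a - (\<Sum>b\<in>B. x b)"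
      using fQ1 aQ by (simp add: sum_subtractf sum.delta B_def sum.inter_filter)
    finally show ?thesis .
  qed
  have PL: "x a = c0 + (\<Sum>b\<in>B. x b)" if "x \<in> P" for x
  proof -
    have "\<forall>v\<in>Q0. real_of_int (\<theta> v) = nf Q1 tv hv x v" using that fQ1 unfolding P_def fp_iff[OF fQ1] by blast
    then have "(\<Sum>v\<in>S. nf Q1 tv hv x v) = c0" unfolding c0_def using SQ by (auto intro!: sum.cong)
    then show ?thesis using keyS[of x] by simp
  qed
  have fP: "f x \<in> R" if x: "x \<in> P" for x
  proof -
    have x1: "\<forall>i. i\<notin>Q1 \<longrightarrow> x i = 0" "\<forall>i\<in>Q1. 0 \<le> x i" "\<forall>v\<in>Q0. real_of_int (\<theta> v) = nf Q1 tv hv x v"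
      using x unfolding P_def fp_iff[OF fQ1] by blast+
    have nfe: "nf (Q1 - {a}) tu hu (f x) w = nf (Q1 - {a}) tu hu x w" for tu hu w
      unfolding f_def by (rule nf_cong) auto
    show ?thesis unfolding R_def fp_iff[OF fQ1'] glueQ
    proof (intro conjI ballI allI impI)
      fix i assume "i \<notin> Q1 - {a}" then show "f x i = 0" using x1 by (auto simp: f_def)
    next
      fix i assume "i \<in> Q1 - {a}" then show "0 \<le> f x i" using x1 by (auto simp: f_def)
    next
      fix w assume w: "w \<in> Q0 - {hv a}"
      show "real_of_int (contr_theta tv hv \<theta> a w) = nf (Q1 - {a}) (glue tv hv a \<circ> tv) (glue tv hv a \<circ> hv) (f x) w"
      proof (cases "w = tv a")
        case True
        then show ?thesis unfolding nfe using nf_glue_t[of Q1 a tv hv x, OF fQ1 aQ th] x1(3) tQ hQ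
          by (simp add: contr_theta_def)
      next
        case False
        then show ?thesis unfolding nfe using nf_glue_other[of Q1 a w tv hv x, OF fQ1 aQ False] bspec[OF x1(3), of w] w
          by (simp add: contr_theta_def)
      qed
    qed
  qed
  have gR: "g y \<in> P" if y: "y \<in> R" for y
  proof -
    have y1: "\<forall>i. i\<notin>Q1 - {a} \<longrightarrow> y i = 0" "\<forall>i\<in>Q1 - {a}. 0 \<le> y i"
       "\<forall>w\<in>Q0 - {hv a}. real_of_int (contr_theta tv hv \<theta> a w) = nf (Q1 - {a}) (glue tv hv a \<circ> tv) (glue tv hv a \<circ> hv) y w"
      using y unfolding R_def fp_iff[OF fQ1'] glueQ by blast+
    have nfe: "nf (Q1 - {a}) tu hu (g y) w = nf (Q1 - {a}) tu hu y w" for tu hu w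
      unfolding g_def by (rule nf_cong) auto
    have gyB: "(\<Sum>b\<in>B. g y b) = (\<Sum>b\<in>B. y b)" using aB unfolding g_def by (auto intro!: sum.cong)
    have oth: "real_of_int (\<theta> v) = nf Q1 tv hv (g y) v" if "v \<in> Q0" "v \<noteq> tv a" "v \<noteq> hv a" for v
      using nf_glue_other[of Q1 a v tv hv "g y", OF fQ1 aQ that(2,3)] bspec[OF y1(3), of v] that unfolding nfe
      by (simp add: contr_theta_def)
    have hh: "real_of_int (\<theta> (hv a)) = nf Q1 tv hv (g y) (hv a)"
    proof -
      have "(\<Sum>v\<in>S. nf Q1 tv hv (g y) v) = c0"
        using keyS[of "g y"] gyB by (simp add: g_def)
      moreover have "(\<Sum>v\<in>S. nf Q1 tv hv (g y) v) = nf Q1 tv hv (g y) (hv a) + (\<Sum>v\<in>S - {hv a}. nf Q1 tv hv (g y) v)"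
        using fS ha by (rule sum.remove)
      moreover have "(\<Sum>v\<in>S - {hv a}. nf Q1 tv hv (g y) v) = (\<Sum>v\<in>S - {hv a}. real_of_int (\<theta> v))"
      proof (rule sum.cong[OF refl])
        fix v assume "v \<in> S - {hv a}"
        then have "v \<in> Q0" "v \<noteq> tv a" "v \<noteq> hv a" using SQ ta by auto
        then show "nf Q1 tv hv (g y) v = real_of_int (\<theta> v)" using oth[of v] by simp
      qed
      moreover have "c0 = real_of_int (\<theta> (hv a)) + (\<Sum>v\<in>S - {hv a}. real_of_int (\<theta> v))"
        unfolding c0_def using sum.remove[OF fS ha, of \<theta>] by simp
      ultimately show ?thesis by linarith
    qed
    have tt: "real_of_int (\<theta> (tv a)) = nf Q1 tv hv (g y) (tv a)"
      using nf_glue_t[of Q1 a tv hv "g y", OF fQ1 aQ th] bspec[OF y1(3), of "tv a"] tQ th hh unfolding nfe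
      by (simp add: contr_theta_def)
    show ?thesis unfolding P_def fp_iff[OF fQ1]
    proof (intro conjI ballI allI impI)
      fix i assume "i \<notin> Q1" then show "g y i = 0" using y1 aQ by (auto simp: g_def)
    next
      fix i assume i: "i \<in> Q1"
      show "0 \<le> g y i"
      proof (cases "i = a")
        case True
        have "0 \<le> (\<Sum>b\<in>B. y b)" using y1(2) BQ by (auto intro!: sum_nonneg)
        moreover have "0 \<le> c0" using pos unfolding c0_def by linarith
        ultimately show ?thesis using True by (simp add: g_def)
      qed (use i y1 in \<open>auto simp: g_def\<close>)
    next
      fix v assume v: "v \<in> Q0"
      show "real_of_int (\<theta> v) = nf Q1 tv hv (g y) v"
        using oth[OF v] hh tt by (cases "v = tv a"; cases "v = hv a") auto
    qed
  qed
  have R0: "y a = 0" if "y \<in> R" for y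
    using that unfolding R_def fp_iff[OF fQ1'] by blast
  have gf: "g (f x) = x" if "x a = c0 + (\<Sum>b\<in>B. x b)" for x
  proof -
    have "(\<Sum>b\<in>B. f x b) = (\<Sum>b\<in>B. x b)" using aB unfolding f_def by (auto intro!: sum.cong)
    then show ?thesis using that unfolding g_def by (auto simp: f_def)
  qed
  have fg: "f (g y) = y" if "y a = 0" for y
    using that unfolding f_def g_def by auto
  have fPR: "f ` P = R"
  proof
    show "f ` P \<subseteq> R" using fP by blast
    show "R \<subseteq> f ` P"
    proof
      fix y assume "y \<in> R" then show "y \<in> f ` P" using gR fg R0 by (metis image_eqI)
    qed
  qed
  have gRP: "g ` R = P"
  proof
    show "g ` R \<subseteq> P" using gR by blast
    show "P \<subseteq> g ` R"
    proof
      fix x assume "x \<in> P" then show "x \<in> g ` R" using fP gf PL by (metis image_eqI)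
    qed
  qed
  have affP: "x a = c0 + (\<Sum>b\<in>B. x b)" if "x \<in> aff_span P" for x
    using aff_lin[OF fB _ that] PL by blast
  have affR: "y a = 0" if "y \<in> aff_span R" for y
    using aff_zero[OF _ that] R0 by blast
  have injf: "inj_on f P" by (metis PL gf inj_onI)
  have injg: "inj_on g R" by (metis R0 fg inj_onI)
  have f_aff: "f ` aff_span P \<subseteq> aff_span R"
    unfolding fPR[symmetric]
    by (rule aff_image[OF injf]) (auto simp: f_def)
  have g_aff: "g ` aff_span R \<subseteq> aff_span P"
    unfolding gRP[symmetric]
  proof (rule aff_image[OF injg])
    fix T and u :: "('a \<Rightarrow> real) \<Rightarrow> real" assume T: "finite T" "T \<subseteq> R" "sum u T = 1"
    have "c0 + (\<Sum>b\<in>B. \<Sum>y\<in>T. u y * y b) = (\<Sum>y\<in>T. u y * (c0 + (\<Sum>b\<in>B. y b)))"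
      using T(3) by (simp add: distrib_left sum.distrib sum_distrib_left sum_distrib_right[symmetric] sum.swap[of _ B])
    then show "g (\<lambda>i. \<Sum>y\<in>T. u y * y i) = (\<lambda>i. \<Sum>y\<in>T. u y * g y i)"
      by (auto simp: g_def)
  qed
  have latf: "f x \<in> lattice_pts" if "x \<in> lattice_pts" for x
    using that unfolding lattice_pts_def f_def by auto
  have latg: "g y \<in> lattice_pts" if "y \<in> lattice_pts" for y
    using that unfolding lattice_pts_def g_def c0_def by (auto intro!: Ints_add Ints_sum)
  have "int_aff_equiv P R"
    unfolding int_aff_equiv_def
  proof (intro exI[of _ f] conjI ballI allI)
    fix x y :: "'a \<Rightarrow> real" and t :: real
    show "f (\<lambda>i. (1 - t) * x i + t * y i) = (\<lambda>j. (1 - t) * f x j + t * f y j)"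
      by (auto simp: f_def)
  next
    show "bij_betw f (aff_span P) (aff_span R)"
      unfolding bij_betw_def
    proof
      show "inj_on f (aff_span P)" by (metis affP gf inj_onI)
      show "f ` aff_span P = aff_span R"
        using f_aff g_aff fg affR by (metis image_eqI subsetI subset_antisym image_subset_iff)
    qed
  next
    show "f ` (aff_span P \<inter> lattice_pts) = aff_span R \<inter> lattice_pts"
    proof
      show "f ` (aff_span P \<inter> lattice_pts) \<subseteq> aff_span R \<inter> lattice_pts" using f_aff latf by blast
      show "aff_span R \<inter> lattice_pts \<subseteq> f ` (aff_span P \<inter> lattice_pts)"
      proof
        fix y assume y: "y \<in> aff_span R \<inter> lattice_pts"
        then have "g y \<in> aff_span P \<inter> lattice_pts" using g_aff latg by blast
        then show "y \<in> f ` (aff_span P \<inter> lattice_pts)" using fg affR y by (metis IntD1 image_eqI)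
      qed
    qed
  next
    show "f ` P = R" by (rule fPR)
  qed
  then show ?thesis unfolding contractable_def P_def R_def using aQ th by blast
qed

theorem proposition4p6:
  fixes Q0 :: "'v set" and Q1 :: "'a set" and tlv hdv :: "'a \<Rightarrow> 'v"
    and \<theta> :: "'v \<Rightarrow> int" and S :: "'v set"
  assumes "finite Q0" and "finite Q1"
    and "\<forall>c\<in>Q1. tlv c \<in> Q0 \<and> hdv c \<in> Q0"
    and "flow_polytope Q0 Q1 tlv hdv \<theta> \<noteq> {}"
    and "S \<subseteq> Q0"
    and "\<forall>a\<in>Q1. \<forall>a'\<in>Q1. hdv a \<in> S \<and> tlv a \<notin> S \<and> hdv a' \<in> S \<and> tlv a' \<notin> S \<longrightarrow> a = a'"
    and "\<forall>b\<in>Q1. \<forall>b'\<in>Q1. hdv b \<notin> S \<and> tlv b \<in> S \<and> hdv b' \<notin> S \<and> tlv b' \<in> S \<longrightarrow> b = b'"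
  shows "(\<forall>a\<in>Q1. hdv a \<in> S \<and> tlv a \<notin> S \<and> sum \<theta> S \<ge> 0 \<longrightarrow> contractable Q0 Q1 tlv hdv \<theta> a) \<and>
         (\<forall>b\<in>Q1. hdv b \<notin> S \<and> tlv b \<in> S \<and> sum \<theta> S \<le> 0 \<longrightarrow> contractable Q0 Q1 tlv hdv \<theta> b)"
proof (intro conjI ballI impI)
  fix a assume a: "a \<in> Q1" "hdv a \<in> S \<and> tlv a \<notin> S \<and> sum \<theta> S \<ge> 0"
  show "contractable Q0 Q1 tlv hdv \<theta> a"
    by (rule contract_in[OF assms(1,2,3,5) a(1)]) (use a assms(6) in auto)
next
  fix b assume b: "b \<in> Q1" "hdv b \<notin> S \<and> tlv b \<in> S \<and> sum \<theta> S \<le> 0"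
  obtain x where x: "x \<in> flow_polytope Q0 Q1 tlv hdv \<theta>" using assms(4) by blast
  have x3: "\<forall>v\<in>Q0. real_of_int (\<theta> v) = nf Q1 tlv hdv x v"
    using x unfolding fp_iff[OF assms(2)] by blast
  have "real_of_int (sum \<theta> Q0) = (\<Sum>v\<in>Q0. nf Q1 tlv hdv x v)"
    using x3 by simp
  also have "\<dots> = 0" unfolding nf_sum[OF assms(1)] using assms(3) by (auto intro!: sum.neutral)
  finally have z: "sum \<theta> Q0 = 0" by (metis of_int_eq_0_iff)
  have "sum \<theta> (Q0 - S) = sum \<theta> Q0 - sum \<theta> S" using assms(1,5) by (simp add: sum_diff)
  then have pos: "sum \<theta> (Q0 - S) \<ge> 0" using z b by simp
  show "contractable Q0 Q1 tlv hdv \<theta> b"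
  proof (rule contract_in[OF assms(1,2,3) _ b(1) _ _ _ pos])
    show "Q0 - S \<subseteq> Q0" by blast
    show "hdv b \<in> Q0 - S" using b assms(3) by auto
    show "tlv b \<notin> Q0 - S" using b by auto
    show "\<forall>c\<in>Q1. hdv c \<in> Q0 - S \<and> tlv c \<notin> Q0 - S \<longrightarrow> c = b"
      using assms(3,7) b by blast
  qed
qed

end
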